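(* Let $\mathbb{P}$ be a class of closed formulas, and let $P$ be a proof in $\mathbf{FBPI}^{\mathbb{P}}$ of a safety problem $\Pi$. Then $\operatorname{Inv}_{\mathrm{pro}}^\rightleftharpoons(P)$ is a safe inductive invariant of $\Pi$, and if $P$ contains $n\in\mathbb{N}$ instances of the rule (Ind) and every predicate in $\mathbb{P}$ has quantification depth at most $d$, then $\operatorname{Inv}_{\mathrm{pro}}^\rightleftharpoons(P)$ has quantification depth at most $n\cdot d$.
   Context: A first-order vocabulary $\Sigma$ consists of constant, function and relation symbols; $\Sigma'=\{a' : a\in\Sigma\}$ is a disjoint copy, and for a formula $\varphi$, $\varphi'$ denotes $\varphi$ with every vocabulary symbol replaced by its primed copy. A safety problem over $\Sigma$ is a triple $(\iota,\tau,\beta)$, where $\iota,\beta$ are closed formulas over $\Sigma$ and $\tau$ is a closed formula over $\Sigma\uplus\Sigma'$. $A\Rightarrow B$ means the implication $A\to B$ is valid; $\tau^{-1}$ is $\tau$ with each symbol and its primed counterpart swapped. A closed formula $\varphi$ over $\Sigma$ is a safe inductive invariant of $(\iota,\tau,\beta)$ if $\iota\Rightarrow\varphi$, $\varphi\wedge\tau\Rightarrow\varphi'$ and $\varphi\Rightarrow\neg\beta$. Quantification depth is the maximal nesting depth of quantifiers. Proofs: a proof of $\Pi$ in a system is a finite tree whose nodes are safety problems (possibly over different vocabularies), whose root is $\Pi$, and in which each node together with its children is an instance of one of the system's rules, with side conditions valid. $\mathbf{FBPI}$ has the rules (for problems over $\Sigma$, $\varphi$ ranging over closed formulas over $\Sigma$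 in the first four): (Ind): no premises; conclusion $(\iota,\tau,\neg\varphi)$; side conditions $\iota\Rightarrow\varphi$ and $\varphi\wedge\tau\Rightarrow\varphi'$. (Cons): premise $(\iota,\tau,\neg\varphi)$; conclusion $(\iota,\tau,\beta)$; side condition $\varphi\Rightarrow\neg\beta$. (Inc): premises $(\iota,\tau,\neg\varphi)$ and $(\iota\wedge\varphi,\ \tau\wedge\varphi\wedge\varphi',\ \beta\wedge\varphi)$; conclusion $(\iota,\tau,\beta)$. (Rev): premise $(\beta,\tau^{-1},\iota)$; conclusion $(\iota,\tau,\beta)$. (Proph): for $\Pi=(\iota,\tau,\beta)$ over $\Sigma$, a fresh constant symbol $w$, a fresh unary relation symbol $m$, and a formula $\varphi(x)$ over $\Sigma$ with free variable $x$: premises $\Pi^{\mathrm{sound}}_\varphi$ and $\Pi^w_\varphi$; conclusion $\Pi$, where $\varphi(w)$ is $\varphi$ with $x$ replaced by $w$, $\Pi^w_\varphi=\big(\iota\wedge\varphi(w),\ \varphi(w)\wedge\tau\wedge w'=w\wedge(\varphi(w))',\ \beta\wedge\varphi(w)\big)$ over $\Sigma\cup\{w\}$, and $\Pi^{\mathrm{sound}}_\varphi=\big(\iota\wedge\forall x.\,\varphi(x)\to m(x),\ \tau\wedge\forall x.\,(m(x)\wedge\varphi(x)\wedge\varphi'(x))\to m'(x),\ \beta\wedge\forall x.\,\varphi(x)\to\neg m(x)\big)$ over $\Sigma\cup\{m\}$. $\mathbf{FBPI}^{\mathbb{P}}$ is $\mathbf{FBPI}$ with applications of (Ind) restricted to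 $\varphi\in\mathbb{P}$. $\operatorname{Inv}_{\mathrm{pro}}^\rightleftharpoons(P)$ is defined by induction on $P$: if the root is the conclusion $(\iota,\tau,\neg\varphi)$ of (Ind), it is $\varphi$; for (Cons) with premise proof $\tilde P$ it is $\operatorname{Inv}_{\mathrm{pro}}^\rightleftharpoons(\tilde P)$; for (Inc) with premise proofs $P_1,P_2$ it is the conjunction of the two; for (Rev) with premise proof $\tilde P$ it is $\neg\operatorname{Inv}_{\mathrm{pro}}^\rightleftharpoons(\tilde P)$; for (Proph) with premise proofs $P_{\mathrm{sound}}$ of $\Pi^{\mathrm{sound}}_\varphi$ and $P_w$ of $\Pi^w_\varphi$, letting $\xi=\operatorname{Inv}_{\mathrm{pro}}^\rightleftharpoons(P_{\mathrm{sound}})$ and $\psi=\operatorname{Inv}_{\mathrm{pro}}^\rightleftharpoons(P_w)$ (with distinct bound variables), it is $\xi[\psi/m]$: the formula obtained from $\xi$ by replacing every atom $m(t)$, for any term $t$, by $\psi[t/w]$. *)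

theory Defs
  imports Main
begin

text \<open>Function symbols (constants are function symbols of arity 0) and relation
symbols carry a name, an arity and a flag telling whether the symbol is a primed copy.
Equality is built in.\<close>

datatype fsym = FSym (fname: nat) (farity: nat) (fprimed: bool)
datatype rsym = RSym (rname: nat) (rarity: nat) (rprimed: bool)

datatype trm = Var nat | Fn fsym "trm list"

datatype form =
    FTrue | FFalse
  | Atom rsym "trm list"
  | Eq trm trm
  | Neg form
  | Conj form form
  | Disj form form
  | Imp form form
  | All nat form
  | Ex nat form

type_synonym vocab = "fsym set \<times> rsym set"

definition is_vocab :: "vocab \<Rightarrow> bool" where
  "is_vocab V \<longleftrightarrow> (\<forall>f\<in>fst V. \<not> fprimed f) \<and> (\<forall>r\<in>snd V. \<not> rprimed r)"

definition prime_f :: "fsym \<Rightarrow> fsym" where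
  "prime_f f = FSym (fname f) (farity f) True"
definition prime_r :: "rsym \<Rightarrow> rsym" where
  "prime_r r = RSym (rname r) (rarity r) True"
definition swap_f :: "fsym \<Rightarrow> fsym" where
  "swap_f f = FSym (fname f) (farity f) (\<not> fprimed f)"
definition swap_r :: "rsym \<Rightarrow> rsym" where
  "swap_r r = RSym (rname r) (rarity r) (\<not> rprimed r)"

definition vboth :: "vocab \<Rightarrow> vocab" where
  "vboth V = (fst V \<union> prime_f ` fst V, snd V \<union> prime_r ` snd V)"

fun twf :: "vocab \<Rightarrow> trm \<Rightarrow> bool" where
  "twf V (Var x) = True"
| "twf V (Fn f ts) = (f \<in> fst V \<and> length ts = farity f \<and> (\<forall>t\<in>set ts. twf V t))"

fun fwf :: "vocab \<Rightarrow> form \<Rightarrow> bool" where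
  "fwf V FTrue = True"
| "fwf V FFalse = True"
| "fwf V (Atom r ts) = (r \<in> snd V \<and> length ts = rarity r \<and> (\<forall>t\<in>set ts. twf V t))"
| "fwf V (Eq s t) = (twf V s \<and> twf V t)"
| "fwf V (Neg p) = fwf V p"
| "fwf V (Conj p q) = (fwf V p \<and> fwf V q)"
| "fwf V (Disj p q) = (fwf V p \<and> fwf V q)"
| "fwf V (Imp p q) = (fwf V p \<and> fwf V q)"
| "fwf V (All x p) = fwf V p"
| "fwf V (Ex x p) = fwf V p"

fun tvars :: "trm \<Rightarrow> nat set" where
  "tvars (Var x) = {x}"
| "tvars (Fn f ts) = \<Union> (set (map tvars ts))"

fun fvars :: "form \<Rightarrow> nat set" where
  "fvars FTrue = {}"
| "fvars FFalse = {}"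
| "fvars (Atom r ts) = \<Union> (set (map tvars ts))"
| "fvars (Eq s t) = tvars s \<union> tvars t"
| "fvars (Neg p) = fvars p"
| "fvars (Conj p q) = fvars p \<union> fvars q"
| "fvars (Disj p q) = fvars p \<union> fvars q"
| "fvars (Imp p q) = fvars p \<union> fvars q"
| "fvars (All x p) = fvars p - {x}"
| "fvars (Ex x p) = fvars p - {x}"

definition closed :: "form \<Rightarrow> bool" where
  "closed p \<longleftrightarrow> fvars p = {}"

definition closed_over :: "vocab \<Rightarrow> form \<Rightarrow> bool" where
  "closed_over V p \<longleftrightarrow> fwf V p \<and> closed p"

fun tmap :: "(fsym \<Rightarrow> fsym) \<Rightarrow> trm \<Rightarrow> trm" where
  "tmap g (Var x) = Var x"
| "tmap g (Fn f ts) = Fn (g f) (map (tmap g) ts)"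

fun fmap :: "(fsym \<Rightarrow> fsym) \<Rightarrow> (rsym \<Rightarrow> rsym) \<Rightarrow> form \<Rightarrow> form" where
  "fmap g h FTrue = FTrue"
| "fmap g h FFalse = FFalse"
| "fmap g h (Atom r ts) = Atom (h r) (map (tmap g) ts)"
| "fmap g h (Eq s t) = Eq (tmap g s) (tmap g t)"
| "fmap g h (Neg p) = Neg (fmap g h p)"
| "fmap g h (Conj p q) = Conj (fmap g h p) (fmap g h q)"
| "fmap g h (Disj p q) = Disj (fmap g h p) (fmap g h q)"
| "fmap g h (Imp p q) = Imp (fmap g h p) (fmap g h q)"
| "fmap g h (All x p) = All x (fmap g h p)"
| "fmap g h (Ex x p) = Ex x (fmap g h p)"

definition fprime :: "form \<Rightarrow> form" where
  "fprime = fmap prime_f prime_r"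

text \<open>\<open>\<tau>\<^sup>-\<^sup>1\<close>: every symbol swapped with its primed counterpart.\<close>
definition finverse :: "form \<Rightarrow> form" where
  "finverse = fmap swap_f swap_r"

text \<open>Substitution of a closed term for a free variable (no capture possible).\<close>
fun tsubstv :: "nat \<Rightarrow> trm \<Rightarrow> trm \<Rightarrow> trm" where
  "tsubstv x s (Var y) = (if y = x then s else Var y)"
| "tsubstv x s (Fn f ts) = Fn f (map (tsubstv x s) ts)"

fun fsubstv :: "nat \<Rightarrow> trm \<Rightarrow> form \<Rightarrow> form" where
  "fsubstv x s FTrue = FTrue"
| "fsubstv x s FFalse = FFalse"
| "fsubstv x s (Atom r ts) = Atom r (map (tsubstv x s) ts)"
| "fsubstv x s (Eq a b) = Eq (tsubstv x s a) (tsubstv x s b)"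
| "fsubstv x s (Neg p) = Neg (fsubstv x s p)"
| "fsubstv x s (Conj p q) = Conj (fsubstv x s p) (fsubstv x s q)"
| "fsubstv x s (Disj p q) = Disj (fsubstv x s p) (fsubstv x s q)"
| "fsubstv x s (Imp p q) = Imp (fsubstv x s p) (fsubstv x s q)"
| "fsubstv x s (All y p) = (if y = x then All y p else All y (fsubstv x s p))"
| "fsubstv x s (Ex y p) = (if y = x then Ex y p else Ex y (fsubstv x s p))"

fun tsubstc :: "fsym \<Rightarrow> trm \<Rightarrow> trm \<Rightarrow> trm" where
  "tsubstc w t (Var y) = Var y"
| "tsubstc w t (Fn f ts) = (if f = w \<and> ts = [] then t else Fn f (map (tsubstc w t) ts))"

fun fsubstc :: "fsym \<Rightarrow> trm \<Rightarrow> form \<Rightarrow> form" where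
  "fsubstc w t FTrue = FTrue"
| "fsubstc w t FFalse = FFalse"
| "fsubstc w t (Atom r ts) = Atom r (map (tsubstc w t) ts)"
| "fsubstc w t (Eq a b) = Eq (tsubstc w t a) (tsubstc w t b)"
| "fsubstc w t (Neg p) = Neg (fsubstc w t p)"
| "fsubstc w t (Conj p q) = Conj (fsubstc w t p) (fsubstc w t q)"
| "fsubstc w t (Disj p q) = Disj (fsubstc w t p) (fsubstc w t q)"
| "fsubstc w t (Imp p q) = Imp (fsubstc w t p) (fsubstc w t q)"
| "fsubstc w t (All y p) = All y (fsubstc w t p)"
| "fsubstc w t (Ex y p) = Ex y (fsubstc w t p)"

text \<open>Shifting all variable indices (free and bound) by \<open>k\<close>: for a closed formula this
is a renaming of bound variables, used to make bound variables distinct.\<close>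
fun tshift :: "nat \<Rightarrow> trm \<Rightarrow> trm" where
  "tshift k (Var y) = Var (y + k)"
| "tshift k (Fn f ts) = Fn f (map (tshift k) ts)"

fun fshift :: "nat \<Rightarrow> form \<Rightarrow> form" where
  "fshift k FTrue = FTrue"
| "fshift k FFalse = FFalse"
| "fshift k (Atom r ts) = Atom r (map (tshift k) ts)"
| "fshift k (Eq a b) = Eq (tshift k a) (tshift k b)"
| "fshift k (Neg p) = Neg (fshift k p)"
| "fshift k (Conj p q) = Conj (fshift k p) (fshift k q)"
| "fshift k (Disj p q) = Disj (fshift k p) (fshift k q)"
| "fshift k (Imp p q) = Imp (fshift k p) (fshift k q)"
| "fshift k (All y p) = All (y + k) (fshift k p)"
| "fshift k (Ex y p) = Ex (y + k) (fshift k p)"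

fun tmaxv :: "trm \<Rightarrow> nat" where
  "tmaxv (Var y) = y"
| "tmaxv (Fn f ts) = foldr max (map tmaxv ts) 0"

fun fmaxv :: "form \<Rightarrow> nat" where
  "fmaxv FTrue = 0"
| "fmaxv FFalse = 0"
| "fmaxv (Atom r ts) = foldr max (map tmaxv ts) 0"
| "fmaxv (Eq a b) = max (tmaxv a) (tmaxv b)"
| "fmaxv (Neg p) = fmaxv p"
| "fmaxv (Conj p q) = max (fmaxv p) (fmaxv q)"
| "fmaxv (Disj p q) = max (fmaxv p) (fmaxv q)"
| "fmaxv (Imp p q) = max (fmaxv p) (fmaxv q)"
| "fmaxv (All y p) = max y (fmaxv p)"
| "fmaxv (Ex y p) = max y (fmaxv p)"

text \<open>\<open>\<xi>[\<psi>/m]\<close>: replace every atom \<open>m(t)\<close> by \<open>\<psi>[t/w]\<close>, where \<open>\<psi>\<close> (closed) is first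
renamed apart so that its bound variables are distinct from all variables of \<open>\<xi>\<close>.\<close>
fun rsubst :: "rsym \<Rightarrow> (trm \<Rightarrow> form) \<Rightarrow> form \<Rightarrow> form" where
  "rsubst m G FTrue = FTrue"
| "rsubst m G FFalse = FFalse"
| "rsubst m G (Atom r ts) =
     (if r = m then (case ts of [t] \<Rightarrow> G t | _ \<Rightarrow> Atom r ts) else Atom r ts)"
| "rsubst m G (Eq a b) = Eq a b"
| "rsubst m G (Neg p) = Neg (rsubst m G p)"
| "rsubst m G (Conj p q) = Conj (rsubst m G p) (rsubst m G q)"
| "rsubst m G (Disj p q) = Disj (rsubst m G p) (rsubst m G q)"
| "rsubst m G (Imp p q) = Imp (rsubst m G p) (rsubst m G q)"
| "rsubst m G (All y p) = All y (rsubst m G p)"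
| "rsubst m G (Ex y p) = Ex y (rsubst m G p)"

definition subst_pred :: "form \<Rightarrow> rsym \<Rightarrow> fsym \<Rightarrow> form \<Rightarrow> form" where
  "subst_pred \<xi> m w \<psi> =
     rsubst m (\<lambda>t. fsubstc w t (fshift (Suc (fmaxv \<xi>)) \<psi>)) \<xi>"

fun qdepth :: "form \<Rightarrow> nat" where
  "qdepth FTrue = 0"
| "qdepth FFalse = 0"
| "qdepth (Atom r ts) = 0"
| "qdepth (Eq a b) = 0"
| "qdepth (Neg p) = qdepth p"
| "qdepth (Conj p q) = max (qdepth p) (qdepth q)"
| "qdepth (Disj p q) = max (qdepth p) (qdepth q)"
| "qdepth (Imp p q) = max (qdepth p) (qdepth q)"
| "qdepth (All y p) = Suc (qdepth p)"
| "qdepth (Ex y p) = Suc (qdepth p)"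

text \<open>Structures over the universe given by a type \<open>'a\<close> (every HOL type is nonempty).\<close>
record 'a struct =
  fint :: "fsym \<Rightarrow> 'a list \<Rightarrow> 'a"
  rint :: "rsym \<Rightarrow> 'a list \<Rightarrow> bool"

fun teval :: "'a struct \<Rightarrow> (nat \<Rightarrow> 'a) \<Rightarrow> trm \<Rightarrow> 'a" where
  "teval S e (Var x) = e x"
| "teval S e (Fn f ts) = fint S f (map (teval S e) ts)"

fun feval :: "'a struct \<Rightarrow> (nat \<Rightarrow> 'a) \<Rightarrow> form \<Rightarrow> bool" where
  "feval S e FTrue = True"
| "feval S e FFalse = False"
| "feval S e (Atom r ts) = rint S r (map (teval S e) ts)"
| "feval S e (Eq a b) = (teval S e a = teval S e b)"
| "feval S e (Neg p) = (\<not> feval S e p)"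
| "feval S e (Conj p q) = (feval S e p \<and> feval S e q)"
| "feval S e (Disj p q) = (feval S e p \<or> feval S e q)"
| "feval S e (Imp p q) = (feval S e p \<longrightarrow> feval S e q)"
| "feval S e (All x p) = (\<forall>a. feval S (e(x := a)) p)"
| "feval S e (Ex x p) = (\<exists>a. feval S (e(x := a)) p)"

definition valid_in :: "'a itself \<Rightarrow> form \<Rightarrow> bool" where
  "valid_in TY p \<longleftrightarrow> (\<forall>(S :: 'a struct) e. feval S e p)"

type_synonym problem = "form \<times> form \<times> form"

definition safety_problem :: "vocab \<Rightarrow> problem \<Rightarrow> bool" where
  "safety_problem V \<Pi> = (case \<Pi> of (\<iota>, \<tau>, \<beta>) \<Rightarrow>
     closed_over V \<iota> \<and> closed_over (vboth V) \<tau> \<and> closed_over V \<beta>)"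

definition safe_inductive_invariant :: "'a itself \<Rightarrow> vocab \<Rightarrow> problem \<Rightarrow> form \<Rightarrow> bool" where
  "safe_inductive_invariant TY V \<Pi> \<phi> = (case \<Pi> of (\<iota>, \<tau>, \<beta>) \<Rightarrow>
     closed_over V \<phi> \<and> valid_in TY (Imp \<iota> \<phi>) \<and>
     valid_in TY (Imp (Conj \<phi> \<tau>) (fprime \<phi>)) \<and> valid_in TY (Imp \<phi> (Neg \<beta>)))"

text \<open>Proof trees, recording the rule applied at each node and its parameters.
\<open>PProph w m x \<phi> Psound Pw\<close>: fresh constant \<open>w\<close>, fresh unary relation \<open>m\<close>,
formula \<open>\<phi>(x)\<close>, proofs of \<open>\<Pi>\<^sup>s\<^sup>o\<^sup>u\<^sup>n\<^sup>d\<close> and \<open>\<Pi>\<^sup>w\<close>.\<close>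
datatype fproof =
    PInd form
  | PCons form fproof
  | PInc form fproof fproof
  | PRev fproof
  | PProph fsym rsym nat form fproof fproof

definition prob_w :: "problem \<Rightarrow> fsym \<Rightarrow> nat \<Rightarrow> form \<Rightarrow> problem" where
  "prob_w \<Pi> w x \<phi> = (case \<Pi> of (\<iota>, \<tau>, \<beta>) \<Rightarrow>
     let \<phi>w = fsubstv x (Fn w []) \<phi> in
     (Conj \<iota> \<phi>w,
      Conj \<phi>w (Conj \<tau> (Conj (Eq (Fn (prime_f w) []) (Fn w [])) (fprime \<phi>w))),
      Conj \<beta> \<phi>w))"

definition prob_sound :: "problem \<Rightarrow> rsym \<Rightarrow> nat \<Rightarrow> form \<Rightarrow> problem" where
  "prob_sound \<Pi> m x \<phi> = (case \<Pi> of (\<iota>, \<tau>, \<beta>) \<Rightarrow>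
     (Conj \<iota> (All x (Imp \<phi> (Atom m [Var x]))),
      Conj \<tau> (All x (Imp (Conj (Atom m [Var x]) (Conj \<phi> (fprime \<phi>))) (Atom (prime_r m) [Var x]))),
      Conj \<beta> (All x (Imp \<phi> (Neg (Atom m [Var x]))))))"

fun fbpi_proof :: "'a itself \<Rightarrow> form set \<Rightarrow> vocab \<Rightarrow> problem \<Rightarrow> fproof \<Rightarrow> bool" where
  "fbpi_proof TY PP V (\<iota>, \<tau>, \<beta>) (PInd \<phi>) =
     (is_vocab V \<and> safety_problem V (\<iota>, \<tau>, \<beta>) \<and> \<phi> \<in> PP \<and> closed_over V \<phi> \<and>
      \<beta> = Neg \<phi> \<and> valid_in TY (Imp \<iota> \<phi>) \<and> valid_in TY (Imp (Conj \<phi> \<tau>) (fprime \<phi>)))"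
| "fbpi_proof TY PP V (\<iota>, \<tau>, \<beta>) (PCons \<phi> P) =
     (is_vocab V \<and> safety_problem V (\<iota>, \<tau>, \<beta>) \<and> closed_over V \<phi> \<and>
      valid_in TY (Imp \<phi> (Neg \<beta>)) \<and> fbpi_proof TY PP V (\<iota>, \<tau>, Neg \<phi>) P)"
| "fbpi_proof TY PP V (\<iota>, \<tau>, \<beta>) (PInc \<phi> P1 P2) =
     (is_vocab V \<and> safety_problem V (\<iota>, \<tau>, \<beta>) \<and> closed_over V \<phi> \<and>
      fbpi_proof TY PP V (\<iota>, \<tau>, Neg \<phi>) P1 \<and>
      fbpi_proof TY PP V (Conj \<iota> \<phi>, Conj \<tau> (Conj \<phi> (fprime \<phi>)), Conj \<beta> \<phi>) P2)"
| "fbpi_proof TY PP V (\<iota>, \<tau>, \<beta>) (PRev P) =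
     (is_vocab V \<and> safety_problem V (\<iota>, \<tau>, \<beta>) \<and>
      fbpi_proof TY PP V (\<beta>, finverse \<tau>, \<iota>) P)"
| "fbpi_proof TY PP V (\<iota>, \<tau>, \<beta>) (PProph w m x \<phi> Ps Pw) =
     (is_vocab V \<and> safety_problem V (\<iota>, \<tau>, \<beta>) \<and>
      farity w = 0 \<and> \<not> fprimed w \<and> w \<notin> fst V \<and>
      rarity m = 1 \<and> \<not> rprimed m \<and> m \<notin> snd V \<and>
      fwf V \<phi> \<and> fvars \<phi> \<subseteq> {x} \<and>
      fbpi_proof TY PP (fst V, insert m (snd V)) (prob_sound (\<iota>, \<tau>, \<beta>) m x \<phi>) Ps \<and>
      fbpi_proof TY PP (insert w (fst V), snd V) (prob_w (\<iota>, \<tau>, \<beta>) w x \<phi>) Pw)"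

fun inv_pro :: "fproof \<Rightarrow> form" where
  "inv_pro (PInd \<phi>) = \<phi>"
| "inv_pro (PCons \<phi> P) = inv_pro P"
| "inv_pro (PInc \<phi> P1 P2) = Conj (inv_pro P1) (inv_pro P2)"
| "inv_pro (PRev P) = Neg (inv_pro P)"
| "inv_pro (PProph w m x \<phi> Ps Pw) = subst_pred (inv_pro Ps) m w (inv_pro Pw)"

fun count_ind :: "fproof \<Rightarrow> nat" where
  "count_ind (PInd \<phi>) = 1"
| "count_ind (PCons \<phi> P) = count_ind P"
| "count_ind (PInc \<phi> P1 P2) = count_ind P1 + count_ind P2"
| "count_ind (PRev P) = count_ind P"
| "count_ind (PProph w m x \<phi> Ps Pw) = count_ind Ps + count_ind Pw"

end

theory Submission
  imports Defs
begin

definition smap :: "(fsym \<Rightarrow> fsym) \<Rightarrow> (rsym \<Rightarrow> rsym) \<Rightarrow> 'a struct \<Rightarrow> 'a struct" where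
  "smap g h S = S\<lparr>fint := fint S \<circ> g, rint := rint S \<circ> h\<rparr>"

lemma teval_tmap: "teval S e (tmap g t) = teval (smap g h S) e t"
proof (induction t)
  case (Fn f ts)
  then show ?case by (simp add: smap_def cong: map_cong)
qed simp

lemma feval_fmap: "feval S e (fmap g h p) = feval (smap g h S) e p"
proof (induction p arbitrary: e)
  case (Atom r ts)
  show ?case by (simp add: smap_def teval_tmap[where h=h, unfolded smap_def] cong: map_cong)
next
  case (Eq a b)
  then show ?case by (simp add: teval_tmap[where h=h])
qed auto

lemma teval_agree: "twf W t \<Longrightarrow> \<forall>f\<in>fst W. fint S f = fint T f \<Longrightarrow> teval S e t = teval T e t"
proof (induction t)
  case (Fn f ts)
  then have "map (teval S e) ts = map (teval T e) ts" by auto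
  then show ?case using Fn by (simp only: teval.simps) simp
qed simp


lemma feval_agree: "fwf W p \<Longrightarrow> \<forall>f\<in>fst W. fint S f = fint T f \<Longrightarrow> \<forall>r\<in>snd W. rint S r = rint T r
   \<Longrightarrow> feval S e p = feval T e p"
proof (induction p arbitrary: e)
  case (Atom r ts)
  then have "map (teval S e) ts = map (teval T e) ts" using teval_agree[of W _ S T] by auto
  then show ?case using Atom by (simp only: feval.simps) simp
next
  case (Eq a b)
  then show ?case using teval_agree[of W _ S T] by simp
qed simp_all

lemma teval_env: "\<forall>v\<in>tvars t. e v = e' v \<Longrightarrow> teval S e t = teval S e' t"
proof (induction t)
  case (Fn f ts)
  then have "map (teval S e) ts = map (teval S e') ts" by auto
  then show ?case by (simp only: teval.simps)
qed simp

lemma feval_env: "\<forall>v\<in>fvars p. e v = e' v \<Longrightarrow> feval S e p = feval S e' p"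
proof (induction p arbitrary: e e')
  case (Atom r ts)
  then have "map (teval S e) ts = map (teval S e') ts" using teval_env[of _ e e' S] by auto
  then show ?case by (simp only: feval.simps)
next
  case (Eq a b)
  then show ?case using teval_env[of _ e e' S] by simp
next
  case (All x p)
  have "feval S (e(x:=a)) p = feval S (e'(x:=a)) p" for a
    using All.prems by (intro All.IH) auto
  then show ?case by simp
next
  case (Ex x p)
  have "feval S (e(x:=a)) p = feval S (e'(x:=a)) p" for a
    using Ex.prems by (intro Ex.IH) auto
  then show ?case by simp
next
  case (Conj p q)
  have "feval S e p = feval S e' p" "feval S e q = feval S e' q"
    using Conj.prems by (intro Conj.IH; simp)+
  then show ?case by simp
next
  case (Disj p q)
  have "feval S e p = feval S e' p" "feval S e q = feval S e' q"
    using Disj.prems by (intro Disj.IH; simp)+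
  then show ?case by simp
next
  case (Imp p q)
  have "feval S e p = feval S e' p" "feval S e q = feval S e' q"
    using Imp.prems by (intro Imp.IH; simp)+
  then show ?case by simp
qed simp_all

lemma feval_closed: "closed p \<Longrightarrow> feval S e p = feval S e' p"
  using feval_env[of p e e'] by (auto simp: closed_def)

lemma teval_closed: "tvars t = {} \<Longrightarrow> teval S e t = teval S e' t"
  using teval_env[of t e e'] by auto

lemma teval_substv: "tvars c = {} \<Longrightarrow> teval S e (tsubstv x c s) = teval S (e(x := teval S e c)) s"
proof (induction s)
  case (Fn f ts)
  then have "\<forall>t\<in>set ts. teval S e (tsubstv x c t) = teval S (e(x := teval S e c)) t" by blast
  then have "map (teval S e \<circ> tsubstv x c) ts = map (teval S (e(x := teval S e c))) ts"
    by (simp only: map_eq_conv o_apply)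
  then show ?case by (simp only: teval.simps tsubstv.simps map_map)
qed simp

lemma feval_substv: "tvars c = {} \<Longrightarrow> feval S e (fsubstv x c p) = feval S (e(x := teval S e c)) p"
proof (induction p arbitrary: e)
  case (Atom r ts)
  then have "map (teval S e \<circ> tsubstv x c) ts = map (teval S (e(x := teval S e c))) ts"
    using teval_substv by auto
  then show ?case by (simp only: feval.simps fsubstv.simps map_map)
next
  case (Eq a b)
  then show ?case using teval_substv[of c S e x a] teval_substv[of c S e x b] by (simp only: feval.simps fsubstv.simps)
next
  case (All y p)
  show ?case
  proof (cases "y = x")
    case False
    have "feval S (e(y:=a)) (fsubstv x c p) = feval S ((e(x := teval S e c))(y:=a)) p" for a
    proof -
      have "feval S (e(y:=a)) (fsubstv x c p) = feval S ((e(y:=a))(x := teval S (e(y:=a)) c)) p"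
        by (rule All.IH[OF All.prems])
      also have "teval S (e(y:=a)) c = teval S e c" by (rule teval_closed[OF All.prems])
      finally show ?thesis using False by (simp only: fun_upd_twist)
    qed
    then show ?thesis using False by (simp del: fun_upd_apply)
  qed (simp del: fun_upd_apply)
next
  case (Ex y p)
  show ?case
  proof (cases "y = x")
    case False
    have "feval S (e(y:=a)) (fsubstv x c p) = feval S ((e(x := teval S e c))(y:=a)) p" for a
    proof -
      have "feval S (e(y:=a)) (fsubstv x c p) = feval S ((e(y:=a))(x := teval S (e(y:=a)) c)) p"
        by (rule Ex.IH[OF Ex.prems])
      also have "teval S (e(y:=a)) c = teval S e c" by (rule teval_closed[OF Ex.prems])
      finally show ?thesis using False by (simp only: fun_upd_twist)
    qed
    then show ?thesis using False by (simp del: fun_upd_apply)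
  qed (simp del: fun_upd_apply)
qed simp_all


definition supd_f :: "'a struct \<Rightarrow> fsym \<Rightarrow> 'a \<Rightarrow> 'a struct" where
  "supd_f S w c = S\<lparr>fint := (fint S)(w := (\<lambda>l. if l = [] then c else fint S w l))\<rparr>"

definition supd_r :: "'a struct \<Rightarrow> rsym \<Rightarrow> ('a list \<Rightarrow> bool) \<Rightarrow> 'a struct" where
  "supd_r S m R = S\<lparr>rint := (rint S)(m := R)\<rparr>"

lemma rint_supd_r[simp]: "rint (supd_r S m R) = (rint S)(m := R)"
  by (simp add: supd_r_def)

lemma teval_fint: "fint S = fint T \<Longrightarrow> teval S e t = teval T e t"
proof (induction t)
  case (Fn f ts)
  then have "map (teval S e) ts = map (teval T e) ts" by auto
  then show ?case using Fn.prems by (simp only: teval.simps)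
qed simp

lemma teval_shift_substc:
  "\<forall>v\<in>tvars t. v < k \<Longrightarrow>
   teval S e (tsubstc w t (tshift k s)) = teval (supd_f S w (teval S e t)) (\<lambda>y. e (y + k)) s"
proof (induction s)
  case (Fn f ts)
  show ?case
  proof (cases "f = w \<and> ts = []")
    case True
    then show ?thesis by (simp add: supd_f_def)
  next
    case False
    have "map (\<lambda>s. teval S e (tsubstc w t (tshift k s))) ts
        = map (teval (supd_f S w (teval S e t)) (\<lambda>y. e (y + k))) ts"
      using Fn by auto
    note M = this
    have H: "fint S f l = fint (supd_f S w (teval S e t)) f l" if "length l = length ts" for l
      using False that by (auto simp: supd_f_def)
    have "tsubstc w t (tshift k (Fn f ts)) = Fn f (map (\<lambda>s. tsubstc w t (tshift k s)) ts)"
      using False by auto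
    then have "teval S e (tsubstc w t (tshift k (Fn f ts)))
       = fint S f (map (\<lambda>s. teval S e (tsubstc w t (tshift k s))) ts)" by (simp add: comp_def)
    also have "\<dots> = fint S f (map (teval (supd_f S w (teval S e t)) (\<lambda>y. e (y + k))) ts)"
      by (simp only: M)
    also have "\<dots> = fint (supd_f S w (teval S e t)) f (map (teval (supd_f S w (teval S e t)) (\<lambda>y. e (y + k))) ts)"
      by (rule H) simp
    finally show ?thesis by simp
  qed
qed simp

lemma feval_shift_substc:
  "\<forall>v\<in>tvars t. v < k \<Longrightarrow>
   feval S e (fsubstc w t (fshift k p)) = feval (supd_f S w (teval S e t)) (\<lambda>y. e (y + k)) p"
proof (induction p arbitrary: e)
  case (Atom r ts)
  have "map (\<lambda>s. teval S e (tsubstc w t (tshift k s))) ts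
        = map (teval (supd_f S w (teval S e t)) (\<lambda>y. e (y + k))) ts"
    using teval_shift_substc[OF Atom.prems] by auto
  note M = this
  have "feval S e (fsubstc w t (fshift k (Atom r ts)))
       = rint S r (map (\<lambda>s. teval S e (tsubstc w t (tshift k s))) ts)" by (simp add: comp_def)
  also have "\<dots> = rint S r (map (teval (supd_f S w (teval S e t)) (\<lambda>y. e (y + k))) ts)"
    by (simp only: M)
  finally show ?case by (simp add: supd_f_def)
next
  case (Eq a b)
  show ?case using teval_shift_substc[OF Eq.prems, of S e w a] teval_shift_substc[OF Eq.prems, of S e w b] by simp
next
  case (All y p)
  have "feval S (e(y + k := a)) (fsubstc w t (fshift k p)) =
        feval (supd_f S w (teval S e t)) ((\<lambda>z. e (z + k))(y := a)) p" for a
  proof -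
    have "teval S (e(y + k := a)) t = teval S e t"
      using All.prems by (intro teval_env) auto
    moreover have "(\<lambda>z. (e(y + k := a)) (z + k)) = (\<lambda>z. e (z + k))(y := a)"
      by auto
    note eqs = calculation this
    have "feval S (e(y + k := a)) (fsubstc w t (fshift k p)) =
      feval (supd_f S w (teval S (e(y + k := a)) t)) (\<lambda>z. (e(y + k := a)) (z + k)) p"
      by (rule All.IH[OF All.prems])
    then show ?thesis by (simp only: eqs)
  qed
  then show ?case by simp
next
  case (Ex y p)
  have "feval S (e(y + k := a)) (fsubstc w t (fshift k p)) =
        feval (supd_f S w (teval S e t)) ((\<lambda>z. e (z + k))(y := a)) p" for a
  proof -
    have "teval S (e(y + k := a)) t = teval S e t"
      using Ex.prems by (intro teval_env) auto
    moreover have "(\<lambda>z. (e(y + k := a)) (z + k)) = (\<lambda>z. e (z + k))(y := a)"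
      by auto
    note eqs = calculation this
    have "feval S (e(y + k := a)) (fsubstc w t (fshift k p)) =
      feval (supd_f S w (teval S (e(y + k := a)) t)) (\<lambda>z. (e(y + k := a)) (z + k)) p"
      by (rule Ex.IH[OF Ex.prems])
    then show ?thesis by (simp only: eqs)
  qed
  then show ?case by simp
qed simp_all

lemma foldr_max_ge: "(x::nat) \<in> set xs \<Longrightarrow> x \<le> foldr max xs 0"
  by (induction xs) auto

lemma tvars_le: "v \<in> tvars t \<Longrightarrow> v \<le> tmaxv t"
proof (induction t)
  case (Fn f ts)
  then obtain s where "s \<in> set ts" "v \<in> tvars s" by auto
  then show ?case using Fn.IH foldr_max_ge[of "tmaxv s" "map tmaxv ts"] by force
qed simp

lemma rsubst_eval:
  assumes "fmaxv p < k"
    and "\<And>e t. \<forall>v\<in>tvars t. v < k \<Longrightarrow> feval S e (G t) = R [teval S e t]"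
    and "\<And>l. length l \<noteq> 1 \<Longrightarrow> R l = rint S m l"
  shows "feval S e (rsubst m G p) = feval (supd_r S m R) e p"
  using assms(1)
proof (induction p arbitrary: e)
  case (Atom r ts)
  have tf0: "teval (supd_r S m R) e' s = teval S e' s" for e' s
    by (rule teval_fint) (simp add: supd_r_def)
  have tf: "map (teval (supd_r S m R) e) ts = map (teval S e) ts"
    by (simp add: tf0)
  show ?case
  proof (cases "r = m")
    case True
    show ?thesis
    proof (cases "\<exists>t. ts = [t]")
      case True
      then obtain t where ts: "ts = [t]" by auto
      have "\<forall>v\<in>tvars t. v < k" using Atom.prems tvars_le[of _ t] by (fastforce simp: ts)
      then show ?thesis using assms(2) ts \<open>r = m\<close> tf by simp
    next
      case False
      then have "rsubst m G (Atom r ts) = Atom r ts" using \<open>r = m\<close>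
        by (cases ts rule: list.exhaust; cases "tl ts"; auto)
      moreover have "length (map (teval S e) ts) \<noteq> 1" using False by (cases ts; cases "tl ts"; auto)
      ultimately have "feval S e (rsubst m G (Atom r ts)) = R (map (teval S e) ts)"
        using assms(3) \<open>r = m\<close> by simp
      also have "\<dots> = feval (supd_r S m R) e (Atom r ts)"
        using \<open>r = m\<close> by (simp only: feval.simps rint_supd_r fun_upd_same tf)
      finally show ?thesis .
    qed
  next
    case False
    then show ?thesis by (simp only: feval.simps rsubst.simps if_False rint_supd_r tf, simp)
  qed
next
  case (Eq a b)
  have tf: "teval (supd_r S m R) e' s = teval S e' s" for e' s
    by (rule teval_fint) (simp add: supd_r_def)
  then show ?case by simp
qed simp_all

lemma subst_pred_eval:
  assumes "closed \<psi>"
  shows "feval S e (subst_pred \<xi> m w \<psi>) =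
    feval (supd_r S m (\<lambda>l. case l of [a] \<Rightarrow> feval (supd_f S w a) e \<psi> | _ \<Rightarrow> rint S m l)) e \<xi>"
  unfolding subst_pred_def
proof (rule rsubst_eval[where k = "Suc (fmaxv \<xi>)"])
  fix e' t assume "\<forall>v\<in>tvars t. v < Suc (fmaxv \<xi>)"
  then show "feval S e' (fsubstc w t (fshift (Suc (fmaxv \<xi>)) \<psi>)) =
     (case [teval S e' t] of [a] \<Rightarrow> feval (supd_f S w a) e \<psi> | _ \<Rightarrow> rint S m [teval S e' t])"
    using feval_shift_substc[OF \<open>\<forall>v\<in>tvars t. v < Suc (fmaxv \<xi>)\<close>, of S e' w \<psi>]
      feval_closed[OF assms, of "supd_f S w (teval S e' t)" _ e] by simp
next
  fix l :: "'a list" assume "length l \<noteq> 1"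
  then show "(case l of [a] \<Rightarrow> feval (supd_f S w a) e \<psi> | _ \<Rightarrow> rint S m l) = rint S m l"
    by (cases l; cases "tl l"; auto)
qed simp


lemma qdepth_fshift[simp]: "qdepth (fshift k p) = qdepth p"
  by (induction p) auto

lemma qdepth_fsubstc[simp]: "qdepth (fsubstc w t p) = qdepth p"
  by (induction p) auto

lemma qdepth_rsubst: "(\<And>t. qdepth (G t) \<le> D) \<Longrightarrow> qdepth (rsubst m G p) \<le> qdepth p + D"
proof (induction p)
  case (Atom r ts)
  then show ?case by (cases ts rule: list.exhaust; cases "tl ts"; auto)
qed fastforce+

lemma qdepth_subst_pred: "qdepth (subst_pred \<xi> m w \<psi>) \<le> qdepth \<xi> + qdepth \<psi>"
  unfolding subst_pred_def by (rule qdepth_rsubst) simp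

lemma tvars_tshift: "tvars (tshift k s) = (\<lambda>y. y + k) ` tvars s"
  by (induction s) auto

lemma fvars_fshift: "fvars (fshift k p) = (\<lambda>y. y + k) ` fvars p"
proof (induction p)
  case (All y p)
  have "inj (\<lambda>y::nat. y + k)" by (simp add: inj_def)
  then show ?case using All by (simp add: image_set_diff)
next
  case (Ex y p)
  have "inj (\<lambda>y::nat. y + k)" by (simp add: inj_def)
  then show ?case using Ex by (simp add: image_set_diff)
qed (auto simp: tvars_tshift image_Un image_Union)


lemma tvars_tsubstc: "tvars (tsubstc w t s) \<subseteq> tvars s \<union> tvars t"
  by (induction s) auto

lemma fvars_fsubstc: "fvars (fsubstc w t p) \<subseteq> fvars p \<union> tvars t"
proof (induction p)
  case (Atom r ts)
  then show ?case using tvars_tsubstc[of w t] by fastforce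
next
  case (Eq a b)
  then show ?case using tvars_tsubstc[of w t] by fastforce
qed auto

lemma fvars_rsubst: "(\<And>t. fvars (G t) \<subseteq> tvars t) \<Longrightarrow> fvars (rsubst m G p) \<subseteq> fvars p"
proof (induction p)
  case (Atom r ts)
  then show ?case by (cases ts rule: list.exhaust; cases "tl ts"; auto)
qed auto

lemma closed_subst_pred: "closed \<xi> \<Longrightarrow> closed \<psi> \<Longrightarrow> closed (subst_pred \<xi> m w \<psi>)"
  unfolding subst_pred_def closed_def
proof -
  assume a: "fvars \<xi> = {}" "fvars \<psi> = {}"
  have "fvars (fsubstc w t (fshift (Suc (fmaxv \<xi>)) \<psi>)) \<subseteq> tvars t" for t
    using fvars_fsubstc[of w t "fshift (Suc (fmaxv \<xi>)) \<psi>"] a by (simp add: fvars_fshift)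
  then show "fvars (rsubst m (\<lambda>t. fsubstc w t (fshift (Suc (fmaxv \<xi>)) \<psi>)) \<xi>) = {}"
    using fvars_rsubst[of "\<lambda>t. fsubstc w t (fshift (Suc (fmaxv \<xi>)) \<psi>)" m \<xi>] a by blast
qed

lemma twf_fst: "fst V = fst W \<Longrightarrow> twf V t = twf W t"
  by (induction t) auto

lemma twf_tshift[simp]: "twf V (tshift k t) = twf V t"
  by (induction t) auto

lemma fwf_fshift[simp]: "fwf V (fshift k p) = fwf V p"
  by (induction p) auto

lemma twf_tsubstc: "twf (insert w (fst V), snd V) s \<Longrightarrow> twf V t \<Longrightarrow> farity w = 0 \<Longrightarrow> twf V (tsubstc w t s)"
proof (induction s)
  case (Fn f ts)
  then show ?case by (cases "f = w") auto
qed simp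

lemma fwf_fsubstc: "fwf (insert w (fst V), snd V) p \<Longrightarrow> twf V t \<Longrightarrow> farity w = 0 \<Longrightarrow> fwf V (fsubstc w t p)"
  by (induction p) (auto simp: twf_tsubstc)

lemma fwf_rsubst: "fwf (fst V, insert m (snd V)) p \<Longrightarrow> rarity m = 1 \<Longrightarrow> (\<And>t. twf V t \<Longrightarrow> fwf V (G t))
  \<Longrightarrow> fwf V (rsubst m G p)"
proof (induction p)
  case (Atom r ts)
  have tw: "twf (fst V, insert m (snd V)) t = twf V t" for t by (rule twf_fst) simp
  show ?case
  proof (cases "r = m")
    case True
    then obtain t where "ts = [t]" using Atom by (cases ts rule: list.exhaust; cases "tl ts"; auto)
    then show ?thesis using Atom True tw by auto
  qed (use Atom tw in auto)
next
  case (Eq a b)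
  have tw: "twf (fst V, insert m (snd V)) t = twf V t" for t by (rule twf_fst) simp
  then show ?case using Eq by auto
qed auto

lemma fwf_subst_pred: "fwf (fst V, insert m (snd V)) \<xi> \<Longrightarrow> fwf (insert w (fst V), snd V) \<psi>
  \<Longrightarrow> rarity m = 1 \<Longrightarrow> farity w = 0 \<Longrightarrow> fwf V (subst_pred \<xi> m w \<psi>)"
  unfolding subst_pred_def by (rule fwf_rsubst) (auto intro: fwf_fsubstc)


lemma validD: "valid_in (TY::'a itself) p \<Longrightarrow> feval (S::'a struct) e p"
  by (simp add: valid_in_def)

lemma fint_smap[simp]: "fint (smap g h S) = fint S \<circ> g" by (simp add: smap_def)
lemma rint_smap[simp]: "rint (smap g h S) = rint S \<circ> h" by (simp add: smap_def)
lemma fint_supd_r[simp]: "fint (supd_r S m R) = fint S" by (simp add: supd_r_def)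
lemma fint_supd_f[simp]: "fint (supd_f S w c) = (fint S)(w := (\<lambda>l. if l = [] then c else fint S w l))"
  by (simp add: supd_f_def)
lemma rint_supd_f[simp]: "rint (supd_f S w c) = rint S" by (simp add: supd_f_def)

lemma agree: "fwf W p \<Longrightarrow> (\<And>f. f \<in> fst W \<Longrightarrow> fint S f = fint T f) \<Longrightarrow> (\<And>r. r \<in> snd W \<Longrightarrow> rint S r = rint T r)
  \<Longrightarrow> feval S e p = feval T e p"
  by (rule feval_agree) auto

lemma feval_fprime: "feval S e (fprime p) = feval (smap prime_f prime_r S) e p"
  by (simp add: fprime_def feval_fmap)

lemma feval_finverse: "feval S e (finverse p) = feval (smap swap_f swap_r S) e p"
  by (simp add: finverse_def feval_fmap)

lemma primed_prime_f[simp]: "fprimed (prime_f f)" by (simp add: prime_f_def)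
lemma primed_prime_r[simp]: "rprimed (prime_r f)" by (simp add: prime_r_def)

lemma prime_f_neq: "\<not> fprimed g \<Longrightarrow> prime_f f \<noteq> g" by auto
lemma prime_r_neq: "\<not> rprimed g \<Longrightarrow> prime_r f \<noteq> g" by auto

lemma prime_f_inj: "\<not> fprimed f \<Longrightarrow> \<not> fprimed g \<Longrightarrow> prime_f f = prime_f g \<Longrightarrow> f = g"
  by (cases f; cases g) (auto simp: prime_f_def)
lemma prime_r_inj: "\<not> rprimed f \<Longrightarrow> \<not> rprimed g \<Longrightarrow> prime_r f = prime_r g \<Longrightarrow> f = g"
  by (cases f; cases g) (auto simp: prime_r_def)

lemma swap_f_unprimed: "\<not> fprimed f \<Longrightarrow> swap_f f = prime_f f" by (simp add: swap_f_def prime_f_def)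
lemma swap_r_unprimed: "\<not> rprimed f \<Longrightarrow> swap_r f = prime_r f" by (simp add: swap_r_def prime_r_def)
lemma swap_prime_f: "\<not> fprimed f \<Longrightarrow> swap_f (prime_f f) = f" by (cases f) (simp add: swap_f_def prime_f_def)
lemma swap_prime_r: "\<not> rprimed f \<Longrightarrow> swap_r (prime_r f) = f" by (cases f) (simp add: swap_r_def prime_r_def)
lemma swap_swap_f[simp]: "swap_f (swap_f f) = f" by (cases f) (simp add: swap_f_def)
lemma swap_swap_r[simp]: "swap_r (swap_r f) = f" by (cases f) (simp add: swap_r_def)

lemma smap_swap_swap[simp]: "smap swap_f swap_r (smap swap_f swap_r S) = S"
  by (simp add: smap_def comp_def)

lemma vocab_f: "is_vocab V \<Longrightarrow> f \<in> fst V \<Longrightarrow> \<not> fprimed f" by (auto simp: is_vocab_def)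
lemma vocab_r: "is_vocab V \<Longrightarrow> r \<in> snd V \<Longrightarrow> \<not> rprimed r" by (auto simp: is_vocab_def)


lemma sound:
  fixes TY :: "'a itself"
  shows "fbpi_proof TY PP V \<Pi> P \<Longrightarrow> safe_inductive_invariant TY V \<Pi> (inv_pro P)"
proof (induction P arbitrary: V \<Pi>)
  case (PInd \<phi>)
  obtain \<iota> \<tau> \<beta> where \<Pi>: "\<Pi> = (\<iota>, \<tau>, \<beta>)" by (cases \<Pi>)
  show ?case using PInd.prems unfolding \<Pi> by (auto simp: safe_inductive_invariant_def valid_in_def)
next
  case (PCons \<phi> P)
  obtain \<iota> \<tau> \<beta> where \<Pi>: "\<Pi> = (\<iota>, \<tau>, \<beta>)" by (cases \<Pi>)
  from PCons.prems have h: "valid_in TY (Imp \<phi> (Neg \<beta>))" "fbpi_proof TY PP V (\<iota>, \<tau>, Neg \<phi>) P"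
    unfolding \<Pi> by auto
  from PCons.IH[OF h(2)] h(1) show ?case unfolding \<Pi>
    by (auto simp: safe_inductive_invariant_def valid_in_def)
next
  case (PInc \<phi> P1 P2)
  obtain \<iota> \<tau> \<beta> where \<Pi>: "\<Pi> = (\<iota>, \<tau>, \<beta>)" by (cases \<Pi>)
  from PInc.prems have h: "closed_over V \<phi>" "fbpi_proof TY PP V (\<iota>, \<tau>, Neg \<phi>) P1"
     "fbpi_proof TY PP V (Conj \<iota> \<phi>, Conj \<tau> (Conj \<phi> (fprime \<phi>)), Conj \<beta> \<phi>) P2"
    unfolding \<Pi> by auto
  note I1 = PInc.IH(1)[OF h(2)] and I2 = PInc.IH(2)[OF h(3)]
  have c: "closed_over V (Conj (inv_pro P1) (inv_pro P2))"
    using I1 I2 by (auto simp: safe_inductive_invariant_def closed_over_def closed_def)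
  have "feval S e (Imp (Conj (Conj (inv_pro P1) (inv_pro P2)) \<tau>) (fprime (Conj (inv_pro P1) (inv_pro P2))))"
    for S :: "'a struct" and e
  proof -
    have a: "feval S e (fprime (inv_pro P1))" if "feval S e (inv_pro P1)" "feval S e \<tau>"
      using validD[of TY "Imp (Conj (inv_pro P1) \<tau>) (fprime (inv_pro P1))" S e] I1 that by (auto simp: safe_inductive_invariant_def)
    have b: "feval S e (fprime \<phi>)" if "feval S e (fprime (inv_pro P1))"
      using validD[of TY "Imp (inv_pro P1) (Neg (Neg \<phi>))" "smap prime_f prime_r S" e] I1 that
      by (auto simp: safe_inductive_invariant_def feval_fprime)
    have d: "feval S e \<phi>" if "feval S e (inv_pro P1)"
      using validD[of TY "Imp (inv_pro P1) (Neg (Neg \<phi>))" S e] I1 that by (auto simp: safe_inductive_invariant_def)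
    show ?thesis using a b d validD[of TY "Imp (Conj (inv_pro P2) (Conj \<tau> (Conj \<phi> (fprime \<phi>)))) (fprime (inv_pro P2))" S e] I2
      by (auto simp: safe_inductive_invariant_def fprime_def)
  qed
  moreover have "feval S e (Imp (Conj (inv_pro P1) (inv_pro P2)) (Neg \<beta>))" for S :: "'a struct" and e
    using validD[of TY "Imp (inv_pro P1) (Neg (Neg \<phi>))" S e]
      validD[of TY "Imp (inv_pro P2) (Neg (Conj \<beta> \<phi>))" S e] I1 I2
    by (auto simp: safe_inductive_invariant_def)
  moreover have "feval S e (Imp \<iota> (Conj (inv_pro P1) (inv_pro P2)))" for S :: "'a struct" and e
    using validD[of TY "Imp (inv_pro P1) (Neg (Neg \<phi>))" S e]
      validD[of TY "Imp \<iota> (inv_pro P1)" S e]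
      validD[of TY "Imp (Conj \<iota> \<phi>) (inv_pro P2)" S e] I1 I2
    by (auto simp: safe_inductive_invariant_def)
  ultimately show ?case using c unfolding \<Pi>
    by (simp add: safe_inductive_invariant_def valid_in_def)
next
  case (PRev P)
  obtain \<iota> \<tau> \<beta> where \<Pi>: "\<Pi> = (\<iota>, \<tau>, \<beta>)" by (cases \<Pi>)
  from PRev.prems have v: "is_vocab V" and h: "fbpi_proof TY PP V (\<beta>, finverse \<tau>, \<iota>) P"
    unfolding \<Pi> by auto
  note I = PRev.IH[OF h]
  define J where "J = inv_pro P"
  have Jc: "closed_over V J" and J1: "valid_in TY (Imp \<beta> J)"
    and J2: "valid_in TY (Imp (Conj J (finverse \<tau>)) (fprime J))" and J3: "valid_in TY (Imp J (Neg \<iota>))"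
    using I by (auto simp: safe_inductive_invariant_def J_def)
  have "\<not> feval S e (fprime J)" if "\<not> feval S e J" "feval S e \<tau>" for S :: "'a struct" and e
  proof
    assume p: "feval S e (fprime J)"
    let ?T = "smap swap_f swap_r S"
    have "feval ?T e J = feval S e (fprime J)" unfolding feval_fprime
      by (rule agree[of V]) (use Jc v in \<open>auto simp: closed_over_def swap_f_unprimed swap_r_unprimed dest: vocab_f vocab_r\<close>)
    moreover have "feval ?T e (finverse \<tau>) = feval S e \<tau>" by (simp add: feval_finverse)
    moreover have "feval ?T e (fprime J) = feval S e J" unfolding feval_fprime
      by (rule agree[of V]) (use Jc v in \<open>auto simp: closed_over_def swap_prime_f swap_prime_r dest: vocab_f vocab_r\<close>)
    ultimately show False using validD[OF J2, of ?T e] p that by simp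
  qed
  then show ?case using Jc J1 J3 unfolding \<Pi>
    by (auto simp: safe_inductive_invariant_def valid_in_def closed_over_def closed_def fprime_def J_def[symmetric])
next
  case (PProph w m x \<phi> Ps Pw)
  obtain \<iota> \<tau> \<beta> where \<Pi>: "\<Pi> = (\<iota>, \<tau>, \<beta>)" by (cases \<Pi>)
  from PProph.prems have v: "is_vocab V" and sp: "safety_problem V (\<iota>, \<tau>, \<beta>)"
    and w: "farity w = 0" "\<not> fprimed w" "w \<notin> fst V"
    and m: "rarity m = 1" "\<not> rprimed m" "m \<notin> snd V"
    and \<phi>: "fwf V \<phi>" "fvars \<phi> \<subseteq> {x}"
    and hs: "fbpi_proof TY PP (fst V, insert m (snd V)) (prob_sound (\<iota>, \<tau>, \<beta>) m x \<phi>) Ps"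
    and hw: "fbpi_proof TY PP (insert w (fst V), snd V) (prob_w (\<iota>, \<tau>, \<beta>) w x \<phi>) Pw"
    unfolding \<Pi> by auto
  define \<xi> where "\<xi> = inv_pro Ps"
  define \<psi> where "\<psi> = inv_pro Pw"
  define \<phi>w where "\<phi>w = fsubstv x (Fn w []) \<phi>"
  have inv: "inv_pro (PProph w m x \<phi> Ps Pw) = subst_pred \<xi> m w \<psi>" by (simp add: \<xi>_def \<psi>_def)
  from PProph.IH(1)[OF hs] have
    \<xi>c: "closed_over (fst V, insert m (snd V)) \<xi>" and
    s1: "valid_in TY (Imp (Conj \<iota> (All x (Imp \<phi> (Atom m [Var x])))) \<xi>)" and
    s2: "valid_in TY (Imp (Conj \<xi> (Conj \<tau> (All x (Imp (Conj (Atom m [Var x]) (Conj \<phi> (fprime \<phi>))) (Atom (prime_r m) [Var x]))))) (fprime \<xi>))" and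
    s3: "valid_in TY (Imp \<xi> (Neg (Conj \<beta> (All x (Imp \<phi> (Neg (Atom m [Var x])))))))"
    by (simp_all add: safe_inductive_invariant_def prob_sound_def \<xi>_def)
  from PProph.IH(2)[OF hw] have
    \<psi>c: "closed_over (insert w (fst V), snd V) \<psi>" and
    w1: "valid_in TY (Imp (Conj \<iota> \<phi>w) \<psi>)" and
    w2: "valid_in TY (Imp (Conj \<psi> (Conj \<phi>w (Conj \<tau> (Conj (Eq (Fn (prime_f w) []) (Fn w [])) (fprime \<phi>w))))) (fprime \<psi>))" and
    w3: "valid_in TY (Imp \<psi> (Neg (Conj \<beta> \<phi>w)))"
    by (simp_all add: safe_inductive_invariant_def prob_w_def \<psi>_def \<phi>w_def Let_def)
  have wf: "fwf V \<iota>" "fwf (vboth V) \<tau>" "fwf V \<beta>"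
    using sp by (auto simp: safety_problem_def closed_over_def)
  have \<psi>cl: "closed \<psi>" using \<psi>c by (simp add: closed_over_def)
  have \<phi>w_eval: "feval S e \<phi>w = feval S (e(x := fint S w [])) \<phi>" for S :: "'a struct" and e
    unfolding \<phi>w_def by (subst feval_substv) auto
  define MM where "MM = (\<lambda>(S::'a struct) (e::nat \<Rightarrow> 'a) l. case l of [a] \<Rightarrow> feval (supd_f S w a) e \<psi> | _ \<Rightarrow> rint S m l)"
  have \<chi>_eval: "feval S e (subst_pred \<xi> m w \<psi>) = feval (supd_r S m (MM S e)) e \<xi>" for S :: "'a struct" and e
    unfolding MM_def by (rule subst_pred_eval[OF \<psi>cl])
  have mV: "\<And>r. r \<in> snd V \<Longrightarrow> r \<noteq> m \<and> r \<noteq> prime_r m \<and> prime_r r \<noteq> m \<and> prime_r r \<noteq> prime_r m"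
    using m v by (auto dest: vocab_r prime_r_inj)
  have wV: "\<And>f. f \<in> fst V \<Longrightarrow> f \<noteq> w \<and> f \<noteq> prime_f w \<and> prime_f f \<noteq> w \<and> prime_f f \<noteq> prime_f w"
    using w v by (auto dest: vocab_f prime_f_inj)
  have mw: "prime_r m \<noteq> m" "prime_f w \<noteq> w" using m(2) w(2) by (metis primed_prime_r, metis primed_prime_f)
  have vbf: "f \<in> fst (vboth V) \<Longrightarrow> f \<in> fst V \<or> (\<exists>g\<in>fst V. f = prime_f g)" for f
    by (auto simp: vboth_def)
  have vbr: "r \<in> snd (vboth V) \<Longrightarrow> r \<in> snd V \<or> (\<exists>g\<in>snd V. r = prime_r g)" for r
    by (auto simp: vboth_def)
  have agV: "feval S e p = feval T e p" if "fwf V p" "\<And>f. f \<in> fst V \<Longrightarrow> fint S f = fint T f"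
    "\<And>r. r \<in> snd V \<Longrightarrow> rint S r = rint T r" for p and S T :: "'a struct" and e
    by (rule agree[OF that])
  have phiw_a: "feval (supd_f S w a) e \<phi>w = feval S (e(x := a)) \<phi>" for S :: "'a struct" and e a
  proof -
    have "feval (supd_f S w a) (e(x := a)) \<phi> = feval S (e(x := a)) \<phi>"
      by (rule agV[OF \<phi>(1)]) (use wV in auto)
    then show ?thesis by (simp add: \<phi>w_eval)
  qed
  have iota_f: "feval (supd_f S w a) e \<iota> = feval S e \<iota>" for S :: "'a struct" and e a
    by (rule agV[OF wf(1)]) (use wV in auto)
  have beta_f: "feval (supd_f S w a) e \<beta> = feval S e \<beta>" for S :: "'a struct" and e a
    by (rule agV[OF wf(3)]) (use wV in auto)
  have iota_r: "feval (supd_r S m R) e \<iota> = feval S e \<iota>" for S :: "'a struct" and e R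
    by (rule agV[OF wf(1)]) (use mV in auto)
  have beta_r: "feval (supd_r S m R) e \<beta> = feval S e \<beta>" for S :: "'a struct" and e R
    by (rule agV[OF wf(3)]) (use mV in auto)
  have phi_r: "feval (supd_r S m R) e' \<phi> = feval S e' \<phi>" for S :: "'a struct" and e' R
    by (rule agV[OF \<phi>(1)]) (use mV in auto)
  have init: "feval S e (subst_pred \<xi> m w \<psi>)" if "feval S e \<iota>" for S :: "'a struct" and e
  proof -
    let ?K = "supd_r S m (MM S e)"
    have "\<forall>a. feval ?K (e(x := a)) \<phi> \<longrightarrow> rint ?K m [a]"
    proof (intro allI impI)
      fix a assume "feval ?K (e(x := a)) \<phi>"
      then have "feval S (e(x := a)) \<phi>" by (simp add: phi_r)
      then have "feval (supd_f S w a) e \<psi>"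
        using validD[OF w1, of "supd_f S w a" e] that by (simp add: phiw_a iota_f)
      then show "rint ?K m [a]" by (simp add: MM_def)
    qed
    then have "feval ?K e \<xi>" using validD[OF s1, of ?K e] that by (simp add: iota_r)
    then show ?thesis by (simp add: \<chi>_eval)
  qed
  have safe: "\<not> feval S e \<beta>" if "feval S e (subst_pred \<xi> m w \<psi>)" for S :: "'a struct" and e
  proof
    assume b: "feval S e \<beta>"
    let ?K = "supd_r S m (MM S e)"
    have "feval ?K e \<xi>" using that by (simp add: \<chi>_eval)
    then obtain a where "feval ?K (e(x := a)) \<phi>" "rint ?K m [a]"
      using validD[OF s3, of ?K e] b by (auto simp: beta_r)
    then have "feval S (e(x := a)) \<phi>" "feval (supd_f S w a) e \<psi>" by (simp_all add: phi_r MM_def)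
    then show False using validD[OF w3, of "supd_f S w a" e] b by (simp add: phiw_a beta_f)
  qed
  have cons: "feval S e (fprime (subst_pred \<xi> m w \<psi>))"
    if c1: "feval S e (subst_pred \<xi> m w \<psi>)" and c2: "feval S e \<tau>" for S :: "'a struct" and e
  proof -
    let ?Sp = "smap prime_f prime_r S"
    let ?K = "supd_r S m (MM S e)"
    let ?T = "supd_r ?K (prime_r m) (MM ?Sp e)"
    have T1: "feval ?T e \<xi>"
    proof -
      have "feval ?K e \<xi>" using c1 by (simp add: \<chi>_eval)
      moreover have "feval ?T e \<xi> = feval ?K e \<xi>"
        by (rule agree[of "(fst V, insert m (snd V))"]) (use \<xi>c mV mw in \<open>auto simp: closed_over_def\<close>)
      ultimately show ?thesis by simp
    qed
    have T2: "feval ?T e \<tau>"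
    proof -
      have "feval ?T e \<tau> = feval S e \<tau>"
        by (rule agree[OF wf(2)]) (use mV m v in \<open>auto dest!: vbr\<close>)
      then show ?thesis using c2 by simp
    qed
    have T3: "\<forall>a. rint ?T m [a] \<and> feval ?T (e(x := a)) \<phi> \<and> feval ?T (e(x := a)) (fprime \<phi>)
                  \<longrightarrow> rint ?T (prime_r m) [a]"
    proof (intro allI impI)
      fix a assume as: "rint ?T m [a] \<and> feval ?T (e(x := a)) \<phi> \<and> feval ?T (e(x := a)) (fprime \<phi>)"
      have a1: "feval (supd_f S w a) e \<psi>" using as mw by (simp add: MM_def)
      have a2: "feval S (e(x := a)) \<phi>"
      proof -
        have "feval ?T (e(x := a)) \<phi> = feval S (e(x := a)) \<phi>"
          by (rule agV[OF \<phi>(1)]) (use mV in auto)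
        then show ?thesis using as by simp
      qed
      have a3: "feval ?Sp (e(x := a)) \<phi>"
      proof -
        have "feval ?T (e(x := a)) (fprime \<phi>) = feval ?Sp (e(x := a)) \<phi>"
          unfolding feval_fprime by (rule agV[OF \<phi>(1)]) (use mV in auto)
        then show ?thesis using as by simp
      qed
      let ?U = "supd_f (supd_f S w a) (prime_f w) a"
      have u1: "feval ?U e \<phi>w"
      proof -
        have "feval ?U e \<phi>w = feval ?U (e(x := a)) \<phi>" using mw by (simp add: \<phi>w_eval)
        also have "\<dots> = feval S (e(x := a)) \<phi>" by (rule agV[OF \<phi>(1)]) (use wV in auto)
        finally show ?thesis using a2 by simp
      qed
      have u2: "feval ?U e \<tau>"
      proof -
        have "feval ?U e \<tau> = feval S e \<tau>"
          by (rule agree[OF wf(2)]) (use wV w v in \<open>auto dest!: vbf\<close>)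
        then show ?thesis using c2 by simp
      qed
      have u3: "feval ?U e (Eq (Fn (prime_f w) []) (Fn w []))" using mw by simp
      have u4: "feval ?U e (fprime \<phi>w)"
      proof -
        have "feval ?U e (fprime \<phi>w) = feval (smap prime_f prime_r ?U) (e(x := a)) \<phi>"
          using mw by (simp add: feval_fprime \<phi>w_eval)
        also have "\<dots> = feval ?Sp (e(x := a)) \<phi>" by (rule agV[OF \<phi>(1)]) (use wV in auto)
        finally show ?thesis using a3 by simp
      qed
      have u5: "feval ?U e \<psi>"
      proof -
        have "feval ?U e \<psi> = feval (supd_f S w a) e \<psi>"
          by (rule agree[of "(insert w (fst V), snd V)"]) (use \<psi>c wV mw in \<open>auto simp: closed_over_def\<close>)
        then show ?thesis using a1 by simp
      qed
      have "feval ?U e (fprime \<psi>)" using validD[OF w2, of ?U e] u1 u2 u3 u4 u5 by simp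
      moreover have "feval ?U e (fprime \<psi>) = feval (supd_f ?Sp w a) e \<psi>"
        unfolding feval_fprime
        by (rule agree[of "(insert w (fst V), snd V)"]) (use \<psi>c wV mw in \<open>auto simp: closed_over_def\<close>)
      ultimately show "rint ?T (prime_r m) [a]" by (simp add: MM_def)
    qed
    have "feval ?T e (fprime \<xi>)" using validD[OF s2, of ?T e] T1 T2 T3 by simp
    moreover have "feval ?T e (fprime \<xi>) = feval (supd_r ?Sp m (MM ?Sp e)) e \<xi>"
      unfolding feval_fprime
      by (rule agree[of "(fst V, insert m (snd V))"]) (use \<xi>c mV mw in \<open>auto simp: closed_over_def\<close>)
    ultimately show ?thesis by (simp add: feval_fprime \<chi>_eval)
  qed
  have clo: "closed_over V (subst_pred \<xi> m w \<psi>)"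
    using \<xi>c \<psi>c m w by (auto simp: closed_over_def intro: closed_subst_pred fwf_subst_pred)
  show ?case unfolding \<Pi> inv using clo init safe cons
    by (simp add: safe_inductive_invariant_def valid_in_def)
qed


lemma depth:
  fixes TY :: "'a itself"
  shows "fbpi_proof TY PP V \<Pi> P \<Longrightarrow> \<forall>\<phi>\<in>PP. qdepth \<phi> \<le> d \<Longrightarrow> qdepth (inv_pro P) \<le> count_ind P * d"
proof (induction P arbitrary: V \<Pi>)
  case (PInd \<phi>)
  obtain \<iota> \<tau> \<beta> where \<Pi>: "\<Pi> = (\<iota>, \<tau>, \<beta>)" by (cases \<Pi>)
  show ?case using PInd.prems unfolding \<Pi> by auto
next
  case (PCons \<phi> P)
  obtain \<iota> \<tau> \<beta> where \<Pi>: "\<Pi> = (\<iota>, \<tau>, \<beta>)" by (cases \<Pi>)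
  have "fbpi_proof TY PP V (\<iota>, \<tau>, Neg \<phi>) P" using PCons.prems unfolding \<Pi> by auto
  then show ?case using PCons.IH PCons.prems(2) by simp
next
  case (PInc \<phi> P1 P2)
  obtain \<iota> \<tau> \<beta> where \<Pi>: "\<Pi> = (\<iota>, \<tau>, \<beta>)" by (cases \<Pi>)
  have h: "fbpi_proof TY PP V (\<iota>, \<tau>, Neg \<phi>) P1"
     "fbpi_proof TY PP V (Conj \<iota> \<phi>, Conj \<tau> (Conj \<phi> (fprime \<phi>)), Conj \<beta> \<phi>) P2"
    using PInc.prems unfolding \<Pi> by auto
  have "qdepth (inv_pro P1) \<le> count_ind P1 * d" "qdepth (inv_pro P2) \<le> count_ind P2 * d"
    using PInc.IH(1)[OF h(1)] PInc.IH(2)[OF h(2)] PInc.prems(2) by simp_all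
  then show ?case by (simp add: add_mult_distrib)
next
  case (PRev P)
  obtain \<iota> \<tau> \<beta> where \<Pi>: "\<Pi> = (\<iota>, \<tau>, \<beta>)" by (cases \<Pi>)
  have "fbpi_proof TY PP V (\<beta>, finverse \<tau>, \<iota>) P" using PRev.prems unfolding \<Pi> by auto
  then show ?case using PRev.IH PRev.prems(2) by simp
next
  case (PProph w m x \<phi> Ps Pw)
  obtain \<iota> \<tau> \<beta> where \<Pi>: "\<Pi> = (\<iota>, \<tau>, \<beta>)" by (cases \<Pi>)
  have h: "fbpi_proof TY PP (fst V, insert m (snd V)) (prob_sound (\<iota>, \<tau>, \<beta>) m x \<phi>) Ps"
    "fbpi_proof TY PP (insert w (fst V), snd V) (prob_w (\<iota>, \<tau>, \<beta>) w x \<phi>) Pw"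
    using PProph.prems unfolding \<Pi> by auto
  have "qdepth (inv_pro Ps) \<le> count_ind Ps * d" "qdepth (inv_pro Pw) \<le> count_ind Pw * d"
    using PProph.IH(1)[OF h(1)] PProph.IH(2)[OF h(2)] PProph.prems(2) by simp_all
  then show ?case using qdepth_subst_pred[of "inv_pro Ps" m w "inv_pro Pw"]
    by (simp add: add_mult_distrib)
qed

theorem theorem5p6:
  fixes PP :: "form set" and V :: vocab and \<Pi> :: problem and P :: fproof and n d :: nat
  assumes "\<forall>\<phi>\<in>PP. closed \<phi>"
    and "fbpi_proof (TYPE('a)) PP V \<Pi> P"
  shows "safe_inductive_invariant (TYPE('a)) V \<Pi> (inv_pro P)
     \<and> ((count_ind P = n \<and> (\<forall>\<phi>\<in>PP. qdepth \<phi> \<le> d)) \<longrightarrow> qdepth (inv_pro P) \<le> n * d)"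
  using sound[OF assms(2)] depth[OF assms(2)] by blast

end
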